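(* Let $m,n\ge 5$ be integers and let $C_m\Box C_n$ be the torus grid graph. Then its disjunctive domination number satisfies $$\frac{mn}{9}\le \gamma_2^d(C_m\Box C_n)\le 2\left\lceil \frac{m}{4}\right\rceil\cdot\left\lceil \frac{n}{4}\right\rceil.$$
   Context: $C_k$ denotes the cycle on $k$ vertices, and $G\Box H$ is the Cartesian product: vertex set $V(G)\times V(H)$, with $(g,h)\sim(g',h')$ iff either $g=g'$ and $hh'\in E(H)$, or $h=h'$ and $gg'\in E(G)$. For a simple graph $\Gamma$ and a vertex $v$, let $\Gamma(v)$ be the set of vertices at distance $1$ from $v$ and $\Gamma_2(v)$ the set of vertices at distance exactly $2$ from $v$. A set $S\subseteq V(\Gamma)$ is a disjunctive dominating set if every vertex $v\notin S$ satisfies $|\Gamma(v)\cap S|\ge 1$ or $|\Gamma_2(v)\cap S|\ge 2$. The disjunctive domination number $\gamma_2^d(\Gamma)$ is the minimum cardinality of a disjunctive dominating set of $\Gamma$. *)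

theory Defs
  imports Main Complex_Main
begin

(* A simple graph is given by a vertex set V and a symmetric irreflexive
   adjacency relation E (only used on V). *)

definition nbhd :: "'a set \<Rightarrow> ('a \<Rightarrow> 'a \<Rightarrow> bool) \<Rightarrow> 'a \<Rightarrow> 'a set" where
  "nbhd V E v = {u \<in> V. E v u}"

definition nbhd2 :: "'a set \<Rightarrow> ('a \<Rightarrow> 'a \<Rightarrow> bool) \<Rightarrow> 'a \<Rightarrow> 'a set" where
  "nbhd2 V E v = {u \<in> V. u \<noteq> v \<and> \<not> E v u \<and> (\<exists>w\<in>V. E v w \<and> E w u)}"

definition disj_dom_set :: "'a set \<Rightarrow> ('a \<Rightarrow> 'a \<Rightarrow> bool) \<Rightarrow> 'a set \<Rightarrow> bool" where
  "disj_dom_set V E S \<longleftrightarrow> S \<subseteq> V \<and>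
     (\<forall>v \<in> V - S. card (nbhd V E v \<inter> S) \<ge> 1 \<or> card (nbhd2 V E v \<inter> S) \<ge> 2)"

definition disj_dom_number :: "'a set \<Rightarrow> ('a \<Rightarrow> 'a \<Rightarrow> bool) \<Rightarrow> nat" where
  "disj_dom_number V E = Min (card ` {S. disj_dom_set V E S})"

definition cyc_adj :: "nat \<Rightarrow> nat \<Rightarrow> nat \<Rightarrow> bool" where
  "cyc_adj k a b \<longleftrightarrow> a \<noteq> b \<and> (b = (a + 1) mod k \<or> a = (b + 1) mod k)"

definition torus_V :: "nat \<Rightarrow> nat \<Rightarrow> (nat \<times> nat) set" where
  "torus_V m n = {0..<m} \<times> {0..<n}"

definition torus_E :: "nat \<Rightarrow> nat \<Rightarrow> nat \<times> nat \<Rightarrow> nat \<times> nat \<Rightarrow> bool" where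
  "torus_E m n p q \<longleftrightarrow>
     (fst p = fst q \<and> cyc_adj n (snd p) (snd q)) \<or>
     (snd p = snd q \<and> cyc_adj m (fst p) (fst q))"

end

theory Submission
  imports Defs
begin

definition tz :: "nat \<Rightarrow> nat \<Rightarrow> bool" where "tz m x = (x mod 4 = 0)"
definition tt :: "nat \<Rightarrow> nat \<Rightarrow> bool" where "tt m x = (x mod 4 = 2 \<or> (m mod 4 = 2 \<and> x = m - 1))"
definition tp :: "nat \<Rightarrow> nat \<Rightarrow> bool \<times> bool" where "tp m x = (tz m x, tt m x)"
definition win :: "nat \<Rightarrow> nat \<Rightarrow> (bool \<times> bool) list" where
  "win m x = [tp m (x mod m), tp m ((x+1) mod m), tp m ((x+2) mod m), tp m ((x+3) mod m), tp m ((x+4) mod m)]"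
definition Wl :: "(bool \<times> bool) list list" where
  "Wl = [[(False, False), (False, True), (False, False), (True, False), (False, False)],
    [(False, False), (False, True), (False, False), (True, False), (False, True)],
    [(False, False), (False, True), (False, False), (True, False), (True, False)],
    [(False, False), (False, True), (True, False), (False, False), (False, True)],
    [(False, False), (True, False), (False, False), (False, True), (False, False)],
    [(False, False), (True, False), (False, False), (False, True), (True, False)],
    [(False, False), (True, False), (False, True), (True, False), (False, False)],
    [(False, False), (True, False), (True, False), (False, False), (False, True)],
    [(False, True), (False, False), (True, False), (False, False), (False, True)],
    [(False, True), (False, False), (True, False), (False, True), (True, False)],
    [(False, True), (False, False), (True, False), (True, False), (False, False)],
    [(False, True), (True, False), (False, False), (False, True), (False, False)],
    [(True, False), (False, False), (False, True), (False, False), (True, False)],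
    [(True, False), (False, False), (False, True), (True, False), (False, False)],
    [(True, False), (False, True), (True, False), (False, False), (False, True)],
    [(True, False), (True, False), (False, False), (False, True), (False, False)]]"

lemma modfix3: "(z::nat) < 3*m \<Longrightarrow> z mod m = (if z < m then z else if z < 2*m then z - m else z - 2*m)"
proof -
  assume a: "z < 3*m"
  show ?thesis
  proof (cases "z < m")
    case True then show ?thesis by simp
  next
    case False
    then have "z mod m = (z - m) mod m" by (simp add: le_mod_geq)
    also have "... = (if z - m < m then z - m else z - 2*m)"
      using a by (simp add: mod_if le_mod_geq diff_diff_add mult_2)
    finally show ?thesis using False a by auto
  qed
qed

lemma r4: "(r::nat) < 4 \<Longrightarrow> r = 0 \<or> r = 1 \<or> r = 2 \<or> r = 3" by arith

lemma window: assumes "5 \<le> m" "i < m" shows "win m (i+m-2) \<in> set Wl"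
proof -
  define q where "q = (m-5) div 4"
  define r where "r = (m-5) mod 4"
  have mq: "m = 4*q+r+5" and r: "r < 4" using assms(1) unfolding q_def r_def by simp_all
  consider "i=0" | "i=1" | "2 \<le> i \<and> i+3 < m" | "i = m-3" | "i = m-2" | "i = m-1" using assms by linarith
  then show ?thesis
  proof cases
    case 1
    then have "(i+m-2) mod m = m - 2" "(i+m-2+1) mod m = m - 1" "(i+m-2+2) mod m = 0"
       "(i+m-2+3) mod m = 1" "(i+m-2+4) mod m = 2" using assms by (auto simp: modfix3)
    then show ?thesis unfolding win_def using r4[OF r] mq
      by (elim disjE) (simp_all add: Wl_def tp_def tz_def tt_def mod_Suc)
  next
    case 2
    then have "(i+m-2) mod m = m - 1" "(i+m-2+1) mod m = 0" "(i+m-2+2) mod m = 1"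
       "(i+m-2+3) mod m = 2" "(i+m-2+4) mod m = 3" using assms by (auto simp: modfix3)
    then show ?thesis unfolding win_def using r4[OF r] mq
      by (elim disjE) (simp_all add: Wl_def tp_def tz_def tt_def mod_Suc)
  next
    case 3
    then have "(i+m-2) mod m = i-2" "(i+m-2+1) mod m = i-1" "(i+m-2+2) mod m = i"
       "(i+m-2+3) mod m = i+1" "(i+m-2+4) mod m = i+2" using assms by (auto simp: modfix3)
    moreover have ne: "i-2 \<noteq> m - 1" "i-1 \<noteq> m - 1" "i \<noteq> m - 1" "i+1 \<noteq> m - 1" "i+2 \<noteq> m - 1" using 3 by linarith+
    ultimately have w: "win m (i+m-2) = [tp m (i-2), tp m (i-1), tp m i, tp m (i+1), tp m (i+2)]"
      unfolding win_def by simp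
    have t: "tp m z = (z mod 4 = 0, z mod 4 = 2)" if "z \<noteq> m - 1" for z
      using that by (simp add: tp_def tz_def tt_def)
    define p where "p = (i-2) div 4"
    define s where "s = (i-2) mod 4"
    have "i-2 = 4*p+s" and s: "s < 4" unfolding p_def s_def by simp_all
    then have ip: "i = 4*p+s+2" using 3 by linarith
    show ?thesis unfolding w using t[OF ne(1)] t[OF ne(2)] t[OF ne(3)] t[OF ne(4)] t[OF ne(5)] r4[OF s] ip
      by (elim disjE) (simp_all add: Wl_def mod_Suc)
  next
    case 4
    then have "(i+m-2) mod m = m-5" "(i+m-2+1) mod m = m-4" "(i+m-2+2) mod m = m-3"
       "(i+m-2+3) mod m = m-2" "(i+m-2+4) mod m = m-1" using assms by (auto simp: modfix3)
    then show ?thesis unfolding win_def using r4[OF r] mq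
      by (elim disjE) (simp_all add: Wl_def tp_def tz_def tt_def mod_Suc)
  next
    case 5
    then have "(i+m-2) mod m = m-4" "(i+m-2+1) mod m = m-3" "(i+m-2+2) mod m = m-2"
       "(i+m-2+3) mod m = m-1" "(i+m-2+4) mod m = 0" using assms by (auto simp: modfix3)
    then show ?thesis unfolding win_def using r4[OF r] mq
      by (elim disjE) (simp_all add: Wl_def tp_def tz_def tt_def mod_Suc)
  next
    case 6
    then have "(i+m-2) mod m = m-3" "(i+m-2+1) mod m = m-2" "(i+m-2+2) mod m = m-1"
       "(i+m-2+3) mod m = 0" "(i+m-2+4) mod m = 1" using assms by (auto simp: modfix3)
    then show ?thesis unfolding win_def using r4[OF r] mq
      by (elim disjE) (simp_all add: Wl_def tp_def tz_def tt_def mod_Suc)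
  qed
qed

definition inS :: "(bool \<times> bool) list \<Rightarrow> (bool \<times> bool) list \<Rightarrow> nat \<times> nat \<Rightarrow> bool" where
  "inS wr wc p = ((fst (wr ! fst p) \<and> fst (wc ! snd p)) \<or> (snd (wr ! fst p) \<and> snd (wc ! snd p)))"

definition N1 :: "(nat \<times> nat) list" where "N1 = [(1,2),(3,2),(2,1),(2,3)]"
definition D2 :: "(nat \<times> nat) list" where "D2 = [(0,2),(4,2),(2,0),(2,4),(1,1),(1,3),(3,1),(3,3)]"

definition cond :: "(bool \<times> bool) list \<Rightarrow> (bool \<times> bool) list \<Rightarrow> bool" where
  "cond wr wc = (inS wr wc (2,2) \<or> (\<exists>p\<in>set N1. inS wr wc p) \<or>
     (\<exists>p\<in>set D2. \<exists>q\<in>set D2. p \<noteq> q \<and> inS wr wc p \<and> inS wr wc q))"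

lemma check: "\<forall>wr\<in>set Wl. \<forall>wc\<in>set Wl. cond wr wc"
  by (simp add: Wl_def cond_def inS_def N1_def D2_def)



lemma cyc_sym: "cyc_adj k a b = cyc_adj k b a"
  unfolding cyc_adj_def by auto

lemma cyc_ne: "cyc_adj k a b \<Longrightarrow> a \<noteq> b"
  unfolding cyc_adj_def by auto

lemma torus_E_sym: "torus_E m n p q = torus_E m n q p"
  unfolding torus_E_def using cyc_sym by auto

lemma modne: "0 < m \<Longrightarrow> k < k' \<Longrightarrow> k' - k < m \<Longrightarrow> (x+k) mod m \<noteq> ((x::nat)+k') mod m"
proof
  assume a: "0 < m" "k < k'" "k' - k < m" "(x+k) mod m = (x+k') mod m"
  then have "m dvd (x+k') - (x+k)" using mod_eq_dvd_iff_nat[of "x+k" "x+k'" m] by simp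
  then have "m dvd k' - k" by simp
  then show False using a by (metis dvd_imp_le zero_less_diff not_le)
qed

lemma cyc_step: "2 \<le> m \<Longrightarrow> cyc_adj m ((x+k) mod m) ((x+Suc k) mod m)"
  unfolding cyc_adj_def
proof
  assume "2 \<le> m"
  then show "(x + k) mod m \<noteq> (x + Suc k) mod m" using modne[of m k "Suc k" x] by simp
  show "(x + Suc k) mod m = ((x + k) mod m + 1) mod m \<or> (x + k) mod m = ((x + Suc k) mod m + 1) mod m"
    by (simp add: mod_Suc_eq)
qed

lemma cyc_non0: "5 \<le> m \<Longrightarrow> \<not> cyc_adj m ((x+2) mod m) ((x+0) mod m)"
proof
  assume a: "5 \<le> m" "cyc_adj m ((x+2) mod m) ((x+0) mod m)"
  have e1: "((x+2) mod m + 1) mod m = (x+3) mod m" using mod_add_left_eq[of "x+2" m 1] by (simp add: numeral_3_eq_3)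
  have e2: "((x+0) mod m + 1) mod m = (x+1) mod m" using mod_add_left_eq[of "x+0" m 1] by simp
  have "(x+0) mod m \<noteq> (x+3) mod m" "(x+2) mod m \<noteq> (x+1) mod m"
    using modne[of m 0 3 x] modne[of m 1 2 x] a(1) by auto
  then show False using a(2) e1 e2 unfolding cyc_adj_def by auto
qed

lemma cyc_non4: "5 \<le> m \<Longrightarrow> \<not> cyc_adj m ((x+2) mod m) ((x+4) mod m)"
proof
  assume a: "5 \<le> m" "cyc_adj m ((x+2) mod m) ((x+4) mod m)"
  have e1: "((x+2) mod m + 1) mod m = (x+3) mod m" using mod_add_left_eq[of "x+2" m 1] by (simp add: numeral_3_eq_3)
  have e2: "((x+4) mod m + 1) mod m = (x+5) mod m" using mod_add_left_eq[of "x+4" m 1] by (simp add: add.commute)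
  have "(x+4) mod m \<noteq> (x+3) mod m" "(x+2) mod m \<noteq> (x+5) mod m"
    using modne[of m 3 4 x] modne[of m 2 5 x] a(1) by auto
  then show False using a(2) e1 e2 unfolding cyc_adj_def by auto
qed

lemma nb_row: "a < m \<Longrightarrow> b < m \<Longrightarrow> c < n \<Longrightarrow> cyc_adj m a b \<Longrightarrow>
    (b,c) \<in> nbhd (torus_V m n) (torus_E m n) (a,c)"
  unfolding nbhd_def torus_V_def torus_E_def by simp

lemma nb_col: "a < m \<Longrightarrow> b < n \<Longrightarrow> c < n \<Longrightarrow> cyc_adj n c b \<Longrightarrow>
    (a,b) \<in> nbhd (torus_V m n) (torus_E m n) (a,c)"
  unfolding nbhd_def torus_V_def torus_E_def by simp

lemma d2_row: "a < m \<Longrightarrow> b < m \<Longrightarrow> w < m \<Longrightarrow> c < n \<Longrightarrow> cyc_adj m a w \<Longrightarrow> cyc_adj m w b \<Longrightarrow>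
   a \<noteq> b \<Longrightarrow> \<not> cyc_adj m a b \<Longrightarrow> (b,c) \<in> nbhd2 (torus_V m n) (torus_E m n) (a,c)"
  unfolding nbhd2_def torus_V_def torus_E_def
  using cyc_ne[of m a w] cyc_ne[of m w b] by simp (metis atLeastLessThan_iff zero_le cyc_sym)

lemma d2_col: "a < m \<Longrightarrow> b < n \<Longrightarrow> w < n \<Longrightarrow> c < n \<Longrightarrow> cyc_adj n c w \<Longrightarrow> cyc_adj n w b \<Longrightarrow>
   c \<noteq> b \<Longrightarrow> \<not> cyc_adj n c b \<Longrightarrow> (a,b) \<in> nbhd2 (torus_V m n) (torus_E m n) (a,c)"
  unfolding nbhd2_def torus_V_def torus_E_def
  using cyc_ne[of n c w] cyc_ne[of n w b] by simp (metis atLeastLessThan_iff zero_le cyc_sym)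

lemma d2_diag: "a < m \<Longrightarrow> a' < m \<Longrightarrow> c < n \<Longrightarrow> c' < n \<Longrightarrow> cyc_adj m a a' \<Longrightarrow> cyc_adj n c c' \<Longrightarrow>
   (a',c') \<in> nbhd2 (torus_V m n) (torus_E m n) (a,c)"
  unfolding nbhd2_def torus_V_def torus_E_def
  using cyc_ne[of m a a'] cyc_ne[of n c c'] by simp (metis atLeastLessThan_iff zero_le cyc_sym)




definition sc :: "nat \<Rightarrow> nat \<Rightarrow> nat" where "sc m a = (a+1) mod m"
definition pr :: "nat \<Rightarrow> nat \<Rightarrow> nat" where "pr m a = (a+m-1) mod m"

lemma cyc_cases: "a < k \<Longrightarrow> b < k \<Longrightarrow> cyc_adj k a b \<Longrightarrow> b = sc k a \<or> b = pr k a"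
proof -
  assume a: "a < k" "b < k" "cyc_adj k a b"
  then consider "b = (a+1) mod k" | "a = (b+1) mod k" unfolding cyc_adj_def by auto
  then show ?thesis
  proof cases
    case 1 then show ?thesis by (simp add: sc_def)
  next
    case 2
    show ?thesis
    proof (cases "b+1 < k")
      case True
      then have "a = b+1" using 2 by simp
      then have "a+k-1 = b + k" by simp
      then show ?thesis unfolding pr_def using a by simp
    next
      case False
      then have "b+1 = k" using a by simp
      then have "a = 0" using 2 by simp
      then have "pr k a = k - 1" unfolding pr_def using a by simp
      moreover have "b = k - 1" using \<open>b+1 = k\<close> by linarith
      ultimately show ?thesis by simp
    qed
  qed
qed

lemma sc_pr: assumes "a < m" shows "sc m (pr m a) = a"
proof (cases "a = 0")
  case True
  then show ?thesis using assms unfolding pr_def sc_def by simp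
next
  case False
  have e: "a + m - 1 = (a - 1) + m" using False by simp
  have "pr m a = ((a - 1) + m) mod m" unfolding pr_def e ..
  also have "\<dots> = a - 1" using assms by simp
  finally have "pr m a = a - 1" .
  moreover have "a - 1 + 1 = a" using False by simp
  ultimately show ?thesis unfolding sc_def using assms by simp
qed
lemma pr_sc: assumes "a < m" shows "pr m (sc m a) = a"
proof (cases "a + 1 < m")
  case True
  then have "sc m a = a + 1" unfolding sc_def by simp
  moreover have "a + 1 + m - 1 = a + m" by simp
  ultimately show ?thesis unfolding pr_def using assms by simp
next
  case False
  then have "a + 1 = m" using assms by simp
  then have "sc m a = 0" unfolding sc_def by simp
  then show ?thesis unfolding pr_def using \<open>a + 1 = m\<close> by simp
qed

lemma sc_lt: "0 < m \<Longrightarrow> sc m a < m" unfolding sc_def by simp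
lemma pr_lt: "0 < m \<Longrightarrow> pr m a < m" unfolding pr_def by simp

lemma nb4: assumes "(a,b) \<in> torus_V m n"
  shows "nbhd (torus_V m n) (torus_E m n) (a,b) \<subseteq> set [(sc m a, b), (pr m a, b), (a, sc n b), (a, pr n b)]"
proof
  fix u assume u: "u \<in> nbhd (torus_V m n) (torus_E m n) (a,b)"
  obtain c d where ud: "u = (c,d)" by (cases u)
  have lt: "a < m" "b < n" "c < m" "d < n" using assms u ud unfolding nbhd_def torus_V_def by auto
  have "torus_E m n (a,b) (c,d)" using u ud unfolding nbhd_def by auto
  then have "(a = c \<and> cyc_adj n b d) \<or> (b = d \<and> cyc_adj m a c)" unfolding torus_E_def by simp
  then show "u \<in> set [(sc m a, b), (pr m a, b), (a, sc n b), (a, pr n b)]"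
    using cyc_cases[of b n d] cyc_cases[of a m c] lt ud by auto
qed

lemma nb8: assumes "(a,b) \<in> torus_V m n"
  shows "nbhd2 (torus_V m n) (torus_E m n) (a,b) \<subseteq> set [(sc m (sc m a), b), (pr m (pr m a), b),
     (a, sc n (sc n b)), (a, pr n (pr n b)), (sc m a, sc n b), (sc m a, pr n b), (pr m a, sc n b), (pr m a, pr n b)]"
proof
  fix u assume u: "u \<in> nbhd2 (torus_V m n) (torus_E m n) (a,b)"
  have lt: "a < m" "b < n" using assms unfolding torus_V_def by auto
  then have pos: "0 < m" "0 < n" by auto
  obtain w where w: "w \<in> torus_V m n" "torus_E m n (a,b) w" "torus_E m n w u" and uv: "u \<noteq> (a,b)"
    and uV: "u \<in> torus_V m n"
    using u unfolding nbhd2_def by auto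
  have "w \<in> nbhd (torus_V m n) (torus_E m n) (a,b)" using w unfolding nbhd_def by auto
  then have w4: "w \<in> set [(sc m a, b), (pr m a, b), (a, sc n b), (a, pr n b)]" using nb4[OF assms] by auto
  obtain c d where wd: "w = (c,d)" by (cases w)
  have "u \<in> nbhd (torus_V m n) (torus_E m n) (c,d)" using w uV wd unfolding nbhd_def by auto
  then have u4: "u \<in> set [(sc m c, d), (pr m c, d), (c, sc n d), (c, pr n d)]" using nb4[of c d m n] w wd by auto
  show "u \<in> set [(sc m (sc m a), b), (pr m (pr m a), b),
     (a, sc n (sc n b)), (a, pr n (pr n b)), (sc m a, sc n b), (sc m a, pr n b), (pr m a, sc n b), (pr m a, pr n b)]"
    using w4 u4 wd uv lt by (auto simp: pr_sc sc_pr)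
qed

lemma dc: assumes "finite V" "S \<subseteq> V" "\<And>u v. u \<in> V \<Longrightarrow> v \<in> V \<Longrightarrow> R u v = R v u"
  shows "(\<Sum>v\<in>V. card {u\<in>S. R v u}) = (\<Sum>u\<in>S. card {v\<in>V. R u v})"
proof -
  have fS: "finite S" using assms finite_subset by blast
  have cs: "card {u\<in>A. P u} = (\<Sum>u\<in>A. if P u then 1 else 0)" if "finite A" for A and P :: "'a \<Rightarrow> bool"
    using sum.inter_filter[OF that, of "\<lambda>_. 1::nat" P] by simp
  have "(\<Sum>v\<in>V. card {u\<in>S. R v u}) = (\<Sum>v\<in>V. \<Sum>u\<in>S. if R v u then 1 else 0)"
    using cs[OF fS] by simp
  also have "\<dots> = (\<Sum>u\<in>S. \<Sum>v\<in>V. if R v u then 1 else 0)" by (rule sum.swap)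
  also have "\<dots> = (\<Sum>u\<in>S. \<Sum>v\<in>V. if R u v then 1 else 0)"
    using assms by (intro sum.cong refl) (auto)
  also have "\<dots> = (\<Sum>u\<in>S. card {v\<in>V. R u v})"
    using cs[OF assms(1)] by simp
  finally show ?thesis .
qed


lemma finV: "finite (torus_V m n)" unfolding torus_V_def by simp

lemma cardV: "card (torus_V m n) = m * n" unfolding torus_V_def by (simp add: card_cartesian_product)

lemma card_filter_sum: "finite A \<Longrightarrow> card {u\<in>A. P u} = (\<Sum>u\<in>A. if P u then 1 else 0)"
  using sum.inter_filter[of A "\<lambda>_. 1::nat" P] by simp

lemma ddn_props:
  assumes "finite V"
  shows "\<exists>S. disj_dom_set V E S \<and> disj_dom_number V E = card S"
    and "disj_dom_set V E T \<Longrightarrow> disj_dom_number V E \<le> card T"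
proof -
  have sub: "{S. disj_dom_set V E S} \<subseteq> Pow V" unfolding disj_dom_set_def by blast
  have fin: "finite {S. disj_dom_set V E S}"
    using finite_subset[OF sub] assms by simp
  then have fin2: "finite (card ` {S. disj_dom_set V E S})" by (rule finite_imageI)
  have ne: "V \<in> {S. disj_dom_set V E S}" unfolding disj_dom_set_def by simp
  then have ne2: "card ` {S. disj_dom_set V E S} \<noteq> {}" by blast
  have "disj_dom_number V E \<in> card ` {S. disj_dom_set V E S}"
    unfolding disj_dom_number_def using Min_in[OF fin2 ne2] .
  then show "\<exists>S. disj_dom_set V E S \<and> disj_dom_number V E = card S" by auto
  assume "disj_dom_set V E T"
  then have "card T \<in> card ` {S. disj_dom_set V E S}" by blast
  then show "disj_dom_number V E \<le> card T"
    unfolding disj_dom_number_def using Min_le[OF fin2] by blast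
qed

lemma nbhd_sym: "u \<in> torus_V m n \<Longrightarrow> v \<in> torus_V m n \<Longrightarrow>
   (u \<in> nbhd (torus_V m n) (torus_E m n) v) = (v \<in> nbhd (torus_V m n) (torus_E m n) u)"
  unfolding nbhd_def using torus_E_sym by auto

lemma nbhd2_sym: "u \<in> torus_V m n \<Longrightarrow> v \<in> torus_V m n \<Longrightarrow>
   (u \<in> nbhd2 (torus_V m n) (torus_E m n) v) = (v \<in> nbhd2 (torus_V m n) (torus_E m n) u)"
  unfolding nbhd2_def by (auto simp: torus_E_sym[of m n u v]) (metis torus_E_sym)+

lemma card_nb4: "v \<in> torus_V m n \<Longrightarrow> card (nbhd (torus_V m n) (torus_E m n) v) \<le> 4"
proof -
  assume v: "v \<in> torus_V m n"
  obtain a b where vab: "v = (a,b)" by (cases v)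
  have "card (nbhd (torus_V m n) (torus_E m n) v) \<le> card (set [(sc m a, b), (pr m a, b), (a, sc n b), (a, pr n b)])"
    by (rule card_mono) (simp, use nb4[of a b m n] v vab in simp)
  also have "\<dots> \<le> 4" using card_length[of "[(sc m a, b), (pr m a, b), (a, sc n b), (a, pr n b)]"] by simp
  finally show ?thesis .
qed

lemma card_nb8: "v \<in> torus_V m n \<Longrightarrow> card (nbhd2 (torus_V m n) (torus_E m n) v) \<le> 8"
proof -
  assume v: "v \<in> torus_V m n"
  obtain a b where vab: "v = (a,b)" by (cases v)
  let ?L = "[(sc m (sc m a), b), (pr m (pr m a), b),
     (a, sc n (sc n b)), (a, pr n (pr n b)), (sc m a, sc n b), (sc m a, pr n b), (pr m a, sc n b), (pr m a, pr n b)]"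
  have "card (nbhd2 (torus_V m n) (torus_E m n) v) \<le> card (set ?L)"
    by (rule card_mono) (simp, use nb8[of a b m n] v vab in simp)
  also have "\<dots> \<le> 8" using card_length[of ?L] by simp
  finally show ?thesis .
qed

lemma lower:
  assumes "disj_dom_set (torus_V m n) (torus_E m n) S"
  shows "m * n \<le> 9 * card S"
proof -
  let ?V = "torus_V m n" and ?E = "torus_E m n"
  have SV: "S \<subseteq> ?V" and dom: "\<And>v. v \<in> ?V - S \<Longrightarrow> card (nbhd ?V ?E v \<inter> S) \<ge> 1 \<or> card (nbhd2 ?V ?E v \<inter> S) \<ge> 2"
    using assms unfolding disj_dom_set_def by auto
  have fS: "finite S" using SV finV finite_subset by blast
  have e1: "nbhd ?V ?E v \<inter> S = {u\<in>S. u \<in> nbhd ?V ?E v}" for v by auto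
  have e2: "nbhd2 ?V ?E v \<inter> S = {u\<in>S. u \<in> nbhd2 ?V ?E v}" for v by auto
  define f where "f v = 2 * (if v \<in> S then 1 else 0) + 2 * card {u\<in>S. u \<in> nbhd ?V ?E v}
       + card {u\<in>S. u \<in> nbhd2 ?V ?E v}" for v
  have key: "2 \<le> f v" if "v \<in> ?V" for v
  proof (cases "v \<in> S")
    case True then show ?thesis unfolding f_def by simp
  next
    case False
    then show ?thesis using dom[of v] that e1 e2 unfolding f_def by auto
  qed
  have "2 * card ?V = (\<Sum>v\<in>?V. 2)" by simp
  also have "\<dots> \<le> (\<Sum>v\<in>?V. f v)" using key by (intro sum_mono) auto
  also have "\<dots> = 2 * (\<Sum>v\<in>?V. (if v \<in> S then 1 else 0)) + 2 * (\<Sum>v\<in>?V. card {u\<in>S. u \<in> nbhd ?V ?E v})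
       + (\<Sum>v\<in>?V. card {u\<in>S. u \<in> nbhd2 ?V ?E v})"
    unfolding f_def by (simp add: sum.distrib sum_distrib_left)
  also have "(\<Sum>v\<in>?V. (if v \<in> S then 1 else 0)) = card S"
  proof -
    have "(\<Sum>v\<in>?V. (if v \<in> S then 1 else 0)) = card {v\<in>?V. v \<in> S}"
      using card_filter_sum[OF finV, where P="\<lambda>v. v \<in> S"] by simp
    also have "{v\<in>?V. v \<in> S} = S" using SV by auto
    finally show ?thesis .
  qed
  also have "(\<Sum>v\<in>?V. card {u\<in>S. u \<in> nbhd ?V ?E v}) = (\<Sum>u\<in>S. card {v\<in>?V. v \<in> nbhd ?V ?E u})"
    by (rule dc[OF finV SV]) (rule nbhd_sym)
  also have "\<dots> \<le> (\<Sum>u\<in>S. 4)"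
  proof (rule sum_mono)
    fix u assume "u \<in> S"
    then have uV: "u \<in> ?V" using SV by auto
    have "{v\<in>?V. v \<in> nbhd ?V ?E u} = nbhd ?V ?E u" unfolding nbhd_def by auto
    then show "card {v\<in>?V. v \<in> nbhd ?V ?E u} \<le> 4" using card_nb4[OF uV] by simp
  qed
  also have "(\<Sum>v\<in>?V. card {u\<in>S. u \<in> nbhd2 ?V ?E v}) = (\<Sum>u\<in>S. card {v\<in>?V. v \<in> nbhd2 ?V ?E u})"
    by (rule dc[OF finV SV]) (rule nbhd2_sym)
  also have "\<dots> \<le> (\<Sum>u\<in>S. 8)"
  proof (rule sum_mono)
    fix u assume "u \<in> S"
    then have uV: "u \<in> ?V" using SV by auto
    have "{v\<in>?V. v \<in> nbhd2 ?V ?E u} = nbhd2 ?V ?E u" unfolding nbhd2_def by auto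
    then show "card {v\<in>?V. v \<in> nbhd2 ?V ?E u} \<le> 8" using card_nb8[OF uV] by simp
  qed
  finally have "2 * card ?V \<le> 2 * card S + 2 * (4 * card S) + 8 * card S" by simp
  then show ?thesis unfolding cardV by linarith
qed

definition DS :: "nat \<Rightarrow> nat \<Rightarrow> (nat \<times> nat) set" where
  "DS m n = {p. fst p < m \<and> snd p < n \<and> ((tz m (fst p) \<and> tz n (snd p)) \<or> (tt m (fst p) \<and> tt n (snd p)))}"

lemma modinj: "5 \<le> m \<Longrightarrow> k < 5 \<Longrightarrow> k' < 5 \<Longrightarrow> ((x::nat)+k) mod m = (x+k') mod m \<Longrightarrow> k = k'"
proof (rule ccontr)
  assume a: "5 \<le> m" "k < 5" "k' < 5" "(x+k) mod m = (x+k') mod m" "k \<noteq> k'"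
  then have "k - k' < m" "k' - k < m" "0 < m" by auto
  then show False using a modne[of m k k' x] modne[of m k' k x] by (cases "k < k'") auto
qed

lemma dom_up:
  assumes m5: "5 \<le> m" and n5: "5 \<le> n"
  shows "disj_dom_set (torus_V m n) (torus_E m n) (DS m n)"
proof -
  let ?V = "torus_V m n" and ?E = "torus_E m n"
  have sub: "DS m n \<subseteq> ?V" unfolding DS_def torus_V_def by auto
  have "card (nbhd ?V ?E v \<inter> DS m n) \<ge> 1 \<or> card (nbhd2 ?V ?E v \<inter> DS m n) \<ge> 2"
    if v: "v \<in> ?V - DS m n" for v
  proof -
    obtain i j where vij: "v = (i,j)" by (cases v)
    have ij: "i < m" "j < n" using v vij unfolding torus_V_def by auto
    define x where "x = i + m - 2"
    define y where "y = j + n - 2"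
    define R where "R k = (x+k) mod m" for k
    define C where "C l = (y+l) mod n" for l
    have m0: "0 < m" "2 \<le> m" and n0: "0 < n" "2 \<le> n" using m5 n5 by auto
    have Rl: "R k < m" for k unfolding R_def using m0 by simp
    have Cl: "C k < n" for k unfolding C_def using n0 by simp
    have "x + 2 = i + m" unfolding x_def using m0 by simp
    then have R2: "R 2 = i" unfolding R_def using ij by simp
    have "y + 2 = j + n" unfolding y_def using n0 by simp
    then have C2: "C 2 = j" unfolding C_def using ij by simp
    have aR: "cyc_adj m (R k) (R (Suc k))" for k unfolding R_def using cyc_step[OF m0(2)] .
    have aC: "cyc_adj n (C k) (C (Suc k))" for k unfolding C_def using cyc_step[OF n0(2)] .
    have r01: "cyc_adj m (R 0) (R 1)" and r12: "cyc_adj m (R 1) (R 2)" and r23: "cyc_adj m (R 2) (R 3)"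
      and r34: "cyc_adj m (R 3) (R 4)"
      using aR[of 0] aR[of 1] aR[of 2] aR[of 3] by (simp_all add: numeral_eq_Suc)
    have c01: "cyc_adj n (C 0) (C 1)" and c12: "cyc_adj n (C 1) (C 2)" and c23: "cyc_adj n (C 2) (C 3)"
      and c34: "cyc_adj n (C 3) (C 4)"
      using aC[of 0] aC[of 1] aC[of 2] aC[of 3] by (simp_all add: numeral_eq_Suc)
    have r10: "cyc_adj m (R 1) (R 0)" and r21: "cyc_adj m (R 2) (R 1)" and r32: "cyc_adj m (R 3) (R 2)"
      and r43: "cyc_adj m (R 4) (R 3)" using r01 r12 r23 r34 cyc_sym by blast+
    have c10: "cyc_adj n (C 1) (C 0)" and c21: "cyc_adj n (C 2) (C 1)" and c32: "cyc_adj n (C 3) (C 2)"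
      and c43: "cyc_adj n (C 4) (C 3)" using c01 c12 c23 c34 cyc_sym by blast+
    have nr0: "\<not> cyc_adj m (R 2) (R 0)" and nr4: "\<not> cyc_adj m (R 2) (R 4)"
      unfolding R_def using cyc_non0[OF m5] cyc_non4[OF m5] by auto
    have nc0: "\<not> cyc_adj n (C 2) (C 0)" and nc4: "\<not> cyc_adj n (C 2) (C 4)"
      unfolding C_def using cyc_non0[OF n5] cyc_non4[OF n5] by auto
    have injR: "R k = R k' \<Longrightarrow> k < 5 \<Longrightarrow> k' < 5 \<Longrightarrow> k = k'" for k k'
      unfolding R_def using modinj[OF m5] by blast
    have injC: "C k = C k' \<Longrightarrow> k < 5 \<Longrightarrow> k' < 5 \<Longrightarrow> k = k'" for k k'
      unfolding C_def using modinj[OF n5] by blast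
    have ne20: "R 2 \<noteq> R 0" "R 2 \<noteq> R 4" "C 2 \<noteq> C 0" "C 2 \<noteq> C 4"
      using injR[of 2 0] injR[of 2 4] injC[of 2 0] injC[of 2 4] by auto
    define P where "P p = (R (fst p), C (snd p))" for p
    have v22: "v = P (2,2)" unfolding P_def using vij R2 C2 by simp
    have memS: "inS (win m x) (win n y) p = (P p \<in> DS m n)" if "p \<in> set ((2,2) # N1 @ D2)" for p
      using that Rl Cl unfolding N1_def D2_def
      by (auto simp: inS_def win_def DS_def tp_def R_def C_def P_def)
    have cnd: "cond (win m x) (win n y)"
      using check window[OF m5 ij(1)] window[OF n5 ij(2)] unfolding x_def y_def by blast
    have nbN1: "P p \<in> nbhd ?V ?E (P (2,2))" if "p \<in> set N1" for p
    proof -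
      have "p = (1,2) \<or> p = (3,2) \<or> p = (2,1) \<or> p = (2,3)" using that unfolding N1_def by auto
      then show ?thesis unfolding P_def
        using nb_row[OF Rl Rl Cl r21] nb_row[OF Rl Rl Cl r23] nb_col[OF Rl Cl Cl c21] nb_col[OF Rl Cl Cl c23]
        by auto
    qed
    have nbD2: "P p \<in> nbhd2 ?V ?E (P (2,2))" if "p \<in> set D2" for p
    proof -
      have "p = (0,2) \<or> p = (4,2) \<or> p = (2,0) \<or> p = (2,4) \<or> p = (1,1) \<or> p = (1,3) \<or> p = (3,1) \<or> p = (3,3)"
        using that unfolding D2_def by auto
      then show ?thesis unfolding P_def
        using d2_row[OF Rl Rl Rl Cl r21 r10 ne20(1) nr0] d2_row[OF Rl Rl Rl Cl r23 r34 ne20(2) nr4]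
          d2_col[OF Rl Cl Cl Cl c21 c10 ne20(3) nc0] d2_col[OF Rl Cl Cl Cl c23 c34 ne20(4) nc4]
          d2_diag[OF Rl Rl Cl Cl r21 c21] d2_diag[OF Rl Rl Cl Cl r21 c23]
          d2_diag[OF Rl Rl Cl Cl r23 c21] d2_diag[OF Rl Rl Cl Cl r23 c23]
        by auto
    qed
    have D5: "fst p < 5 \<and> snd p < 5" if "p \<in> set D2" for p using that unfolding D2_def by auto
    have finN: "finite (nbhd ?V ?E v)" "finite (nbhd2 ?V ?E v)"
      using finV by (auto intro: finite_subset simp: nbhd_def nbhd2_def)
    have vnot: "v \<notin> DS m n" using v by auto
    consider "inS (win m x) (win n y) (2,2)" | "\<exists>p\<in>set N1. inS (win m x) (win n y) p"
      | "\<exists>p\<in>set D2. \<exists>q\<in>set D2. p \<noteq> q \<and> inS (win m x) (win n y) p \<and> inS (win m x) (win n y) q"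
      using cnd unfolding cond_def by blast
    then show ?thesis
    proof cases
      case 1
      then have "P (2,2) \<in> DS m n" using memS[of "(2,2)"] by simp
      then show ?thesis using vnot v22 by simp
    next
      case 2
      then obtain p where p: "p \<in> set N1" "inS (win m x) (win n y) p" by blast
      then have "P p \<in> DS m n" using memS[of p] by simp
      moreover have "P p \<in> nbhd ?V ?E v" using nbN1[OF p(1)] v22 by simp
      ultimately have "nbhd ?V ?E v \<inter> DS m n \<noteq> {}" by blast
      moreover have "finite (nbhd ?V ?E v \<inter> DS m n)" using finN by simp
      ultimately show ?thesis by (simp add: Suc_le_eq card_gt_0_iff)
    next
      case 3
      then obtain p q where pq: "p \<in> set D2" "q \<in> set D2" "p \<noteq> q"
        "inS (win m x) (win n y) p" "inS (win m x) (win n y) q" by blast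
      then have "P p \<in> DS m n" "P q \<in> DS m n" using memS[of p] memS[of q] by auto
      moreover have "P p \<in> nbhd2 ?V ?E v" "P q \<in> nbhd2 ?V ?E v" using nbD2 pq v22 by auto
      moreover have "P p \<noteq> P q"
      proof
        assume "P p = P q"
        then have "R (fst p) = R (fst q)" "C (snd p) = C (snd q)" unfolding P_def by auto
        then have "fst p = fst q" "snd p = snd q" using injR injC D5 pq by blast+
        then show False using pq(3) by (simp add: prod_eq_iff)
      qed
      ultimately have "{P p, P q} \<subseteq> nbhd2 ?V ?E v \<inter> DS m n" "card {P p, P q} = 2" by auto
      moreover have "finite (nbhd2 ?V ?E v \<inter> DS m n)" using finN by simp
      ultimately show ?thesis by (metis card_mono)
    qed
  qed
  then show ?thesis unfolding disj_dom_set_def using sub by blast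
qed

lemma cardA0: "card {a. a < m \<and> tz m a} \<le> (m+3) div 4"
proof -
  have "{a. a < m \<and> tz m a} \<subseteq> (\<lambda>k. 4*k) ` {..<(m+3) div 4}"
  proof
    fix a assume "a \<in> {a. a < m \<and> tz m a}"
    then have a: "a < m" "a mod 4 = 0" unfolding tz_def by auto
    then have "a = 4 * (a div 4)" "a div 4 < (m+3) div 4" by presburger+
    then show "a \<in> (\<lambda>k. 4*k) ` {..<(m+3) div 4}" by blast
  qed
  then have "card {a. a < m \<and> tz m a} \<le> card ((\<lambda>k. 4*k) ` {..<(m+3) div 4})"
    by (intro card_mono) auto
  also have "\<dots> \<le> (m+3) div 4" using card_image_le[of "{..<(m+3) div 4}" "\<lambda>k. 4*k"] by simp
  finally show ?thesis .
qed

lemma cardA2: "card {a. a < m \<and> tt m a} \<le> (m+3) div 4"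
proof -
  have "{a. a < m \<and> tt m a} \<subseteq> (\<lambda>k. min (4*k+2) (m-1)) ` {..<(m+3) div 4}"
  proof
    fix a assume "a \<in> {a. a < m \<and> tt m a}"
    then have a: "a < m" "a mod 4 = 2 \<or> (m mod 4 = 2 \<and> a = m - 1)" unfolding tt_def by auto
    show "a \<in> (\<lambda>k. min (4*k+2) (m-1)) ` {..<(m+3) div 4}"
    proof (cases "a mod 4 = 2")
      case True
      then have "a = min (4 * (a div 4) + 2) (m-1)" "a div 4 < (m+3) div 4" using a by presburger+
      then show ?thesis by blast
    next
      case False
      then have "m mod 4 = 2" "a = m - 1" using a by auto
      then have "a = min (4 * (m div 4) + 2) (m-1)" "m div 4 < (m+3) div 4" by presburger+
      then show ?thesis by blast
    qed
  qed
  then have "card {a. a < m \<and> tt m a} \<le> card ((\<lambda>k. min (4*k+2) (m-1)) ` {..<(m+3) div 4})"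
    by (intro card_mono) auto
  also have "\<dots> \<le> (m+3) div 4" using card_image_le[of "{..<(m+3) div 4}" "\<lambda>k. min (4*k+2) (m-1)"] by simp
  finally show ?thesis .
qed

lemma DS_card: "card (DS m n) \<le> 2 * (((m+3) div 4) * ((n+3) div 4))"
proof -
  let ?A0 = "{a. a < m \<and> tz m a}" and ?B0 = "{a. a < n \<and> tz n a}"
  let ?A2 = "{a. a < m \<and> tt m a}" and ?B2 = "{a. a < n \<and> tt n a}"
  have e: "DS m n = ?A0 \<times> ?B0 \<union> ?A2 \<times> ?B2" unfolding DS_def by auto
  have "card (DS m n) \<le> card (?A0 \<times> ?B0) + card (?A2 \<times> ?B2)" unfolding e by (rule card_Un_le)
  also have "\<dots> = card ?A0 * card ?B0 + card ?A2 * card ?B2" by (simp add: card_cartesian_product)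
  also have "\<dots> \<le> ((m+3) div 4) * ((n+3) div 4) + ((m+3) div 4) * ((n+3) div 4)"
    using cardA0[of m] cardA0[of n] cardA2[of m] cardA2[of n] by (intro add_mono mult_le_mono) auto
  finally show ?thesis by simp
qed

lemma ceil4: "\<lceil>real m / 4\<rceil> = int ((m+3) div 4)"
proof (rule ceiling_unique)
  have "4 * ((m+3) div 4) \<le> m + 3" "m \<le> 4 * ((m+3) div 4)" by presburger+
  then have a: "4 * real ((m+3) div 4) \<le> real m + 3" "real m \<le> 4 * real ((m+3) div 4)"
    by (metis of_nat_add of_nat_le_iff of_nat_mult of_nat_numeral)+
  show "real_of_int (int ((m + 3) div 4)) - 1 < real m / 4" using a by simp
  show "real m / 4 \<le> real_of_int (int ((m + 3) div 4))" using a by simp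
qed

theorem theorem1:
  fixes m n :: nat
  assumes "m \<ge> 5" and "n \<ge> 5"
  shows "real (m * n) / 9 \<le> real (disj_dom_number (torus_V m n) (torus_E m n))
       \<and> real (disj_dom_number (torus_V m n) (torus_E m n))
           \<le> 2 * real_of_int (\<lceil>real m / 4\<rceil> * \<lceil>real n / 4\<rceil>)"
proof
  obtain S where S: "disj_dom_set (torus_V m n) (torus_E m n) S"
    "disj_dom_number (torus_V m n) (torus_E m n) = card S"
    using ddn_props(1)[OF finV] by blast
  have "m * n \<le> 9 * card S" by (rule lower[OF S(1)])
  then have "real (m * n) \<le> 9 * real (card S)" by (metis of_nat_le_iff of_nat_mult of_nat_numeral)
  then show "real (m * n) / 9 \<le> real (disj_dom_number (torus_V m n) (torus_E m n))"
    using S(2) by simp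
next
  have "disj_dom_number (torus_V m n) (torus_E m n) \<le> card (DS m n)"
    by (rule ddn_props(2)[OF finV dom_up[OF assms]])
  also have "\<dots> \<le> 2 * (((m+3) div 4) * ((n+3) div 4))" by (rule DS_card)
  finally have "real (disj_dom_number (torus_V m n) (torus_E m n)) \<le> real (2 * (((m+3) div 4) * ((n+3) div 4)))"
    by (simp only: of_nat_le_iff)
  also have "\<dots> = 2 * real_of_int (\<lceil>real m / 4\<rceil> * \<lceil>real n / 4\<rceil>)"
    unfolding ceil4 by simp
  finally show "real (disj_dom_number (torus_V m n) (torus_E m n)) \<le> 2 * real_of_int (\<lceil>real m / 4\<rceil> * \<lceil>real n / 4\<rceil>)" .
qed

end
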